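(* Let $t$ be an integer with $m=2t+1\geq 11$, $n=2^m+1$, $\delta_1=\frac{n}{3}$ and $\delta_2=\frac{n-3}{6}$. If $x$ is an odd integer with $\delta_2<x\leq n-1$ and $x\neq\delta_1$, then $x$ is not a coset leader modulo $n$.
   Context: For $n=2^m+1$ and an integer $x$, the 2-cyclotomic coset of $x$ modulo $n$ is $C_x=\{x\cdot 2^{j} \bmod n : j\geq 0\}\subseteq\{0,1,\dots,n-1\}$. For $0\leq x\leq n-1$, "$x$ is a coset leader" means that $x$ is the smallest element of $C_x$. *)

theory Defs
  imports Complex_Main
begin

definition cyc_coset :: "nat \<Rightarrow> nat \<Rightarrow> nat set" where
  "cyc_coset n x = {x * 2 ^ j mod n | j. True}"

definition coset_leader :: "nat \<Rightarrow> nat \<Rightarrow> bool" where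
  "coset_leader n x \<longleftrightarrow> x \<le> n - 1 \<and> (\<forall>y \<in> cyc_coset n x. x \<le> y)"

end

theory Submission
  imports Defs
begin

lemma neg_pow:
  fixes a m :: nat
  shows "(a * 2^m) mod (2^m+1) = (2^m + 1 - a mod (2^m+1)) mod (2^m+1)"
proof -
  let ?n = "2^m+1 :: nat"
  have "?n > 0" by simp
  have "a mod ?n \<le> ?n" by (simp add: less_imp_le)
  have e: "a * 2^m + a = a * ?n" by (simp add: algebra_simps)
  have "(a * ?n) mod ?n = 0" by (rule mod_mult_self2_is_0)
  hence "(a * 2^m + a) mod ?n = 0" by (simp only: e)
  hence A: "(a * 2^m + a mod ?n) mod ?n = 0" by (metis mod_add_right_eq)
  have "(a * 2^m) mod ?n = ((a*2^m + a mod ?n) + (?n - a mod ?n)) mod ?n"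
  proof -
    have eq: "(a*2^m + a mod ?n) + (?n - a mod ?n) = a*2^m + ?n"
      using \<open>a mod ?n \<le> ?n\<close> by simp
    thus ?thesis by (subst eq) (rule mod_add_self2[symmetric])
  qed
  also have "\<dots> = (((a*2^m + a mod ?n) mod ?n) + (?n - a mod ?n)) mod ?n"
    by (simp only: mod_add_left_eq)
  also have "\<dots> = (?n - a mod ?n) mod ?n" using A by simp
  finally show ?thesis .
qed

lemma pow6: "(2::nat)^(2*k+1) mod 6 = 2"
proof (induction k)
  case 0 show ?case by simp
next
  case (Suc k)
  have "(2::nat)^(2*Suc k+1) = 4 * 2^(2*k+1)" by simp
  hence "(2::nat)^(2*Suc k+1) mod 6 = (4 * (2^(2*k+1) mod 6)) mod 6" by (simp add: mod_mult_right_eq)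
  thus ?case using Suc by simp
qed

theorem lemma3p4:
  fixes t :: int and m n x :: nat
  assumes "int m = 2 * t + 1" and "m \<ge> 11" and "n = 2 ^ m + 1"
    and "odd x"
    and "(of_nat x :: rat) > ((of_nat n :: rat) - 3) / 6" and "x \<le> n - 1"
    and "(of_nat x :: rat) \<noteq> (of_nat n :: rat) / 3"
  shows "\<not> coset_leader n x"
proof
  assume L: "coset_leader n x"
  obtain k :: nat where mk: "m = 2*k+1" using assms(1)
  proof -
    have "t \<ge> 0" using assms(1,2) by linarith
    hence "int m = int (2 * nat t + 1)" using assms(1) by simp
    hence "m = 2 * nat t + 1" by (simp only: of_nat_eq_iff)
    thus ?thesis using that by blast
  qed
  have n3: "n mod 6 = 3"
  proof -
    have "(2::nat)^m mod 6 = 2" unfolding mk by (rule pow6)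
    thus ?thesis using assms(3) by presburger
  qed
  have "rat_of_nat n < rat_of_nat (6*x+3)" using assms(5) by (simp add: field_simps)
  hence "n < 6*x+3" by (simp only: of_nat_less_iff)
  hence x6: "n < 6*x" using n3 by presburger
  have x3: "3*x \<noteq> n"
  proof
    assume "3*x = n"
    hence "rat_of_nat n = 3 * rat_of_nat x" by (metis of_nat_mult of_nat_numeral)
    thus False using assms(7) by simp
  qed
  have npos: "n > 1" using assms(3) by simp
  have cop: "coprime n (2^j)" for j
    using assms(2,3) by simp
  define z where "z j = x * 2^j mod n" for j
  have zin: "z j \<in> cyc_coset n x" for j unfolding z_def cyc_coset_def by blast
  have xpos: "x > 0" using assms(4) by (cases x) auto
  have xlt: "x < n" using assms(6) npos by linarith
  have znz: "z j \<noteq> 0" for j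
  proof
    assume "z j = 0"
    hence "n dvd x * 2^j" unfolding z_def by auto
    hence "n dvd x" using cop[of j] by (metis coprime_dvd_mult_left_iff)
    thus False using xpos xlt by (meson nat_dvd_not_less)
  qed
  have zlt: "z j < n" for j unfolding z_def using npos by simp
  have zm: "z (j+m) = n - z j" for j
  proof -
    have "z (j+m) = (x*2^j * 2^m) mod (2^m+1)" unfolding z_def assms(3) by (simp add: power_add mult.assoc)
    also have "\<dots> = (n - z j) mod n" unfolding neg_pow z_def assms(3) ..
    also have "\<dots> = n - z j" using znz[of j] zlt[of j] by simp
    finally show ?thesis .
  qed
  have low: "x \<le> z j" for j using L zin unfolding coset_leader_def by blast
  have high: "x \<le> n - z j" for j using low[of "j+m"] zm by simp
  have z0: "z 0 = x" unfolding z_def using xlt by simp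
  have x2: "2*x \<le> n" using high[of 0] z0 by simp
  have z3: "3 * z j \<noteq> n \<and> 3 * z j \<noteq> 2*n" for j
  proof
    have "n dvd 3 * z j \<Longrightarrow> False"
    proof -
      assume "n dvd 3 * z j"
      have "(3 * (x*2^j)) mod n = (3 * z j) mod n" unfolding z_def by (simp add: mod_mult_right_eq)
      hence "n dvd 3 * (x * 2^j)" using \<open>n dvd 3 * z j\<close> by (simp add: dvd_eq_mod_eq_0)
      hence "n dvd 3 * x * 2^j" by (simp add: mult.assoc)
      hence "n dvd 3 * x" using cop[of j] by (metis coprime_dvd_mult_left_iff)
      then obtain c where c: "3*x = n*c" by blast
      have "n*(2*c) = 6*x" using c by simp
      hence "n*(2*c) \<le> n*3" using x2 by linarith
      hence "2*c \<le> 3" using npos by simp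
      moreover have "c \<noteq> 0"
      proof
        assume "c = 0"
        with c have "3*x = 0" by simp
        with xpos show False by simp
      qed
      ultimately have "c = 1" by linarith
      thus False using c x3 by simp
    qed
    thus "3 * z j \<noteq> n" by auto
    show "3 * z j \<noteq> 2*n" using \<open>n dvd 3 * z j \<Longrightarrow> False\<close> by auto
  qed
  have zs: "z (Suc j) = (2 * z j) mod n" for j
    unfolding z_def by (simp add: mod_mult_right_eq mult.commute mult.left_commute)
  define M where "M w \<longleftrightarrow> n < 3*w \<and> 3*w < 2*n" for w
  have alt: "M (z (Suc j)) \<longleftrightarrow> \<not> M (z j)" for j
  proof -
    have a: "x \<le> z j" "x \<le> n - z j" "z j < n" using low high zlt by auto
    have b: "3 * z j \<noteq> n" "3 * z j \<noteq> 2*n" using z3 by auto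
    show ?thesis
    proof (cases "2 * z j < n")
      case True
      hence "z (Suc j) = 2 * z j" using zs by simp
      thus ?thesis unfolding M_def using a b x6 True by linarith
    next
      case False
      hence "z (Suc j) = 2 * z j - n" using zs a(3) by (simp add: le_mod_geq)
      thus ?thesis unfolding M_def using a b x6 False by linarith
    qed
  qed
  have ind: "M (z j) \<longleftrightarrow> (M x \<longleftrightarrow> even j)" for j
    by (induction j) (auto simp: z0 alt)
  have "M (z m) \<longleftrightarrow> M x" using zm[of 0] z0 xlt unfolding M_def by auto
  thus False using ind[of m] mk by simp
qed

end
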